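(* Let $G$ be a group generated by elements $x_1,\dots,x_n$ such that $[e]_g$ is a subgroup of $G$ for every $g\in G$. Then: (1) $\gamma_2(G)=[e]_{x_1}[e]_{x_2}\cdots[e]_{x_{n-1}}$ (a product of subgroups of $G$); (2) if $k\ge 1$ and $h_1,\dots,h_s\in G$ are such that $\gamma_k(G)=[e]_{h_1}[e]_{h_2}\cdots[e]_{h_s}$, and $p_{ij}=[x_i,h_j]$ for $i=1,\dots,n$, $j=1,\dots,s$, then $\gamma_{k+1}(G)=\prod_{i=1}^{n}\prod_{j=1}^{s}[e]_{p_{ij}}$.
   Context: $[x,y]=x^{-1}y^{-1}xy$. For $g\in G$, $[e]_g=\{[x,g]\mid x\in G\}$ (the twisted conjugacy class of the unit element for the inner automorphism $x\mapsto g^{-1}xg$). $\gamma_1(G)=G$, $\gamma_{k+1}(G)=[\gamma_k(G),G]$ is the lower central series. For subgroups $A_1,\dots,A_m$, $A_1\cdots A_m$ denotes the set of products $a_1\cdots a_m$ with $a_i\in A_i$. *)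

theory Defs
  imports "HOL-Algebra.Algebra"
begin

definition comm :: "('a, 'b) monoid_scheme \<Rightarrow> 'a \<Rightarrow> 'a \<Rightarrow> 'a" where
  "comm G x y = inv\<^bsub>G\<^esub> x \<otimes>\<^bsub>G\<^esub> inv\<^bsub>G\<^esub> y \<otimes>\<^bsub>G\<^esub> x \<otimes>\<^bsub>G\<^esub> y"

definition eclass :: "('a, 'b) monoid_scheme \<Rightarrow> 'a \<Rightarrow> 'a set" where
  "eclass G g = {comm G x g | x. x \<in> carrier G}"

text \<open>Lower central series: gamma G 1 = G, gamma G (k+1) = [gamma G k, G]
  (the subgroup generated by the commutators). gamma G 0 is set to G as a dummy.\<close>
primrec gamma :: "('a, 'b) monoid_scheme \<Rightarrow> nat \<Rightarrow> 'a set" where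
  "gamma G 0 = carrier G"
| "gamma G (Suc k) = (if k = 0 then carrier G
     else generate G {comm G a g | a g. a \<in> gamma G k \<and> g \<in> carrier G})"

definition set_prod_list :: "('a, 'b) monoid_scheme \<Rightarrow> 'a set list \<Rightarrow> 'a set" where
  "set_prod_list G As = foldr (\<lambda>A B. A <#>\<^bsub>G\<^esub> B) As {\<one>\<^bsub>G\<^esub>}"

end

theory Submission imports Defs begin

definition cent :: "('a, 'b) monoid_scheme \<Rightarrow> 'a set \<Rightarrow> 'a \<Rightarrow> 'a set" where
  "cent G N a = {b \<in> carrier G. comm G b a \<in> N}"

definition Zc :: "('a, 'b) monoid_scheme \<Rightarrow> 'a set \<Rightarrow> 'a set" where
  "Zc G N = {z \<in> carrier G. \<forall>y\<in>carrier G. comm G z y \<in> N}"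

context group begin

lemma inv_cancel_left[simp]: "x \<in> carrier G \<Longrightarrow> y \<in> carrier G \<Longrightarrow> inv x \<otimes> (x \<otimes> y) = y"
  by (simp add: m_assoc[symmetric])
lemma inv_cancel_left2[simp]: "x \<in> carrier G \<Longrightarrow> y \<in> carrier G \<Longrightarrow> x \<otimes> (inv x \<otimes> y) = y"
  by (simp add: m_assoc[symmetric])

lemma comm_closed[simp]: "a \<in> carrier G \<Longrightarrow> b \<in> carrier G \<Longrightarrow> comm G a b \<in> carrier G"
  by (simp add: comm_def)

lemma comm_mult: "x \<in> carrier G \<Longrightarrow> y \<in> carrier G \<Longrightarrow> a \<in> carrier G \<Longrightarrow>
  comm G (x \<otimes> y) a = (inv y \<otimes> comm G x a \<otimes> y) \<otimes> comm G y a"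
  by (simp add: comm_def m_assoc inv_mult_group)

lemma comm_inv: "x \<in> carrier G \<Longrightarrow> a \<in> carrier G \<Longrightarrow>
  comm G (inv x) a = x \<otimes> inv (comm G x a) \<otimes> inv x"
  by (simp add: comm_def m_assoc inv_mult_group)

lemma comm_one[simp]: "a \<in> carrier G \<Longrightarrow> comm G \<one> a = \<one>"
  by (simp add: comm_def m_assoc)

lemma comm_self[simp]: "a \<in> carrier G \<Longrightarrow> comm G a a = \<one>"
  by (simp add: comm_def m_assoc)

lemma comm_swap: "a \<in> carrier G \<Longrightarrow> b \<in> carrier G \<Longrightarrow> comm G a b = inv (comm G b a)"
  by (simp add: comm_def m_assoc inv_mult_group)

lemma conj_comm: "x \<in> carrier G \<Longrightarrow> y \<in> carrier G \<Longrightarrow> g \<in> carrier G \<Longrightarrow>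
  inv y \<otimes> comm G x g \<otimes> y = comm G (x \<otimes> y) g \<otimes> inv (comm G y g)"
  by (simp add: comm_def m_assoc inv_mult_group)

lemma conj_central: "x \<in> carrier G \<Longrightarrow> c \<in> carrier G \<Longrightarrow>
  x \<otimes> c \<otimes> inv x = c \<otimes> comm G c (inv x)"
  by (simp add: comm_def m_assoc)

lemma comm_right: "y \<in> carrier G \<Longrightarrow> n \<in> carrier G \<Longrightarrow>
  comm G y n = (inv y \<otimes> inv n \<otimes> y) \<otimes> n"
  by (simp add: comm_def m_assoc)



lemma cent_subgroup:
  assumes N: "N \<lhd> G" and a: "a \<in> carrier G"
  shows "subgroup (cent G N a) G"
proof (rule subgroupI)
  interpret N: normal N G by (rule N)
  show "cent G N a \<subseteq> carrier G" by (auto simp: cent_def)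
  show "cent G N a \<noteq> {}" using a N.one_closed by (auto simp: cent_def intro!: exI[of _ \<one>])
  fix b assume b: "b \<in> cent G N a"
  then have bc: "b \<in> carrier G" and bn: "comm G b a \<in> N" by (auto simp: cent_def)
  have "b \<otimes> inv (comm G b a) \<otimes> inv b \<in> N"
    using N.inv_op_closed2[OF bc N.m_inv_closed[OF bn]] .
  then show "inv b \<in> cent G N a" using bc a by (simp add: cent_def comm_inv)
  fix c assume c: "c \<in> cent G N a"
  then have cc: "c \<in> carrier G" and cn: "comm G c a \<in> N" by (auto simp: cent_def)
  have "inv c \<otimes> comm G b a \<otimes> c \<in> N" using N.inv_op_closed1[OF cc bn] .
  then have "(inv c \<otimes> comm G b a \<otimes> c) \<otimes> comm G c a \<in> N" using cn N.m_closed by blast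
  then show "b \<otimes> c \<in> cent G N a" using bc cc a by (simp add: cent_def comm_mult)
qed

lemma normal_comm_in:
  assumes N: "N \<lhd> G" and y: "y \<in> carrier G" and n: "n \<in> N"
  shows "comm G y n \<in> N"
proof -
  interpret N: normal N G by (rule N)
  have nc: "n \<in> carrier G" using n N.subset by blast
  have "inv y \<otimes> inv n \<otimes> y \<in> N" using N.inv_op_closed1[OF y N.m_inv_closed[OF n]] .
  then show ?thesis using comm_right[OF y nc] n N.m_closed by simp
qed

lemma Zc_normal:
  assumes N: "N \<lhd> G"
  shows "Zc G N \<lhd> G" "N \<subseteq> Zc G N"
proof -
  interpret N: normal N G by (rule N)
  have Zc_eq: "Zc G N = carrier G \<inter> (\<Inter>y\<in>carrier G. cent G N y)"
    by (auto simp: Zc_def cent_def)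
  have sg: "subgroup (Zc G N) G"
  proof (rule subgroupI)
    show "Zc G N \<subseteq> carrier G" by (auto simp: Zc_def)
    show "Zc G N \<noteq> {}" using N.one_closed by (auto simp: Zc_def intro!: exI[of _ \<one>])
    fix b assume b: "b \<in> Zc G N"
    then show "inv b \<in> Zc G N" unfolding Zc_eq
      using subgroup.m_inv_closed[OF cent_subgroup[OF N]] by auto
    fix c assume "c \<in> Zc G N"
    with b show "b \<otimes> c \<in> Zc G N" unfolding Zc_eq
      using subgroup.m_closed[OF cent_subgroup[OF N]] by auto
  qed
  show sub: "N \<subseteq> Zc G N"
  proof
    fix n assume n: "n \<in> N"
    have nc: "n \<in> carrier G" using n N.subset by blast
    have "\<forall>y\<in>carrier G. comm G n y \<in> N"
      using normal_comm_in[OF N _ n] comm_swap nc n N.m_inv_closed by (metis comm_closed)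
    then show "n \<in> Zc G N" using nc by (simp add: Zc_def)
  qed
  show "Zc G N \<lhd> G" unfolding normal_inv_iff
  proof (intro conjI ballI sg)
    fix x h assume x: "x \<in> carrier G" and h: "h \<in> Zc G N"
    then have hc: "h \<in> carrier G" by (simp add: Zc_def)
    have "comm G h (inv x) \<in> Zc G N" using h x sub by (auto simp: Zc_def)
    then show "x \<otimes> h \<otimes> inv x \<in> Zc G N" using conj_central[OF x hc] subgroup.m_closed[OF sg h] by simp
  qed
qed

lemma eclass_normal:
  assumes g: "g \<in> carrier G" and sg: "subgroup (eclass G g) G"
  shows "eclass G g \<lhd> G"
  unfolding normal_inv_iff
proof (intro conjI ballI sg)
  fix y h assume y: "y \<in> carrier G" and h: "h \<in> eclass G g"
  then obtain x where x: "x \<in> carrier G" and hx: "h = comm G x g" by (auto simp: eclass_def)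
  have iy: "inv y \<in> carrier G" using y by simp
  have e1: "comm G (x \<otimes> inv y) g \<in> eclass G g" using x iy by (auto simp: eclass_def)
  have e2: "comm G (inv y) g \<in> eclass G g" using iy by (auto simp: eclass_def)
  have "inv (inv y) \<otimes> comm G x g \<otimes> inv y = comm G (x \<otimes> inv y) g \<otimes> inv (comm G (inv y) g)"
    using conj_comm[OF x iy g] .
  then show "y \<otimes> h \<otimes> inv y \<in> eclass G g"
    using hx y subgroup.m_closed[OF sg e1 subgroup.m_inv_closed[OF sg e2]] by simp
qed

lemma set_prod_list_normal:
  assumes "\<forall>A\<in>set As. A \<lhd> G"
  shows "set_prod_list G As \<lhd> G"
  using assms
proof (induction As)
  case Nil
  then show ?case by (simp add: set_prod_list_def one_is_normal)
next
  case (Cons A As)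
  have A: "A \<lhd> G" and P: "set_prod_list G As \<lhd> G" using Cons by auto
  interpret A: normal A G by (rule A)
  interpret P: normal "set_prod_list G As" G by (rule P)
  have eq: "set_prod_list G (A # As) = A <#> set_prod_list G As"
    by (simp add: set_prod_list_def)
  show ?case unfolding eq normal_inv_iff
  proof (intro conjI ballI)
    show "subgroup (A <#> set_prod_list G As) G"
      by (rule mult_norm_subgroup[OF A P.subgroup_axioms])
    fix x h assume x: "x \<in> carrier G" and h: "h \<in> A <#> set_prod_list G As"
    then obtain a b where a: "a \<in> A" and b: "b \<in> set_prod_list G As" and hab: "h = a \<otimes> b"
      by (auto simp: set_mult_def)
    have ac: "a \<in> carrier G" and bc: "b \<in> carrier G" using a b A.subset P.subset by auto
    have "x \<otimes> h \<otimes> inv x = (x \<otimes> a \<otimes> inv x) \<otimes> (x \<otimes> b \<otimes> inv x)"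
      using x ac bc hab by (simp add: m_assoc)
    moreover have "x \<otimes> a \<otimes> inv x \<in> A" "x \<otimes> b \<otimes> inv x \<in> set_prod_list G As"
      using A.inv_op_closed2[OF x a] P.inv_op_closed2[OF x b] by auto
    ultimately show "x \<otimes> h \<otimes> inv x \<in> A <#> set_prod_list G As"
      by (auto simp: set_mult_def)
  qed
qed

lemma set_prod_list_sub:
  assumes H: "subgroup H G" and "\<forall>A\<in>set As. A \<subseteq> H"
  shows "set_prod_list G As \<subseteq> H"
  using assms(2)
proof (induction As)
  case Nil
  then show ?case using subgroup.one_closed[OF H] by (simp add: set_prod_list_def)
next
  case (Cons A As)
  then show ?case using subgroup.m_closed[OF H]
    by (auto simp: set_prod_list_def set_mult_def)
qed

lemma set_prod_list_super:
  assumes "\<forall>A\<in>set As. subgroup A G" and "B \<in> set As"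
  shows "B \<subseteq> set_prod_list G As"
  using assms
proof (induction As)
  case Nil
  then show ?case by simp
next
  case (Cons A As)
  have A: "subgroup A G" and Ps: "\<forall>A\<in>set As. subgroup A G" using Cons.prems by auto
  have Psub: "set_prod_list G As \<subseteq> carrier G"
    using set_prod_list_sub[OF subgroup_self] Ps subgroup.subset by blast
  have oneP: "\<one> \<in> set_prod_list G As"
  proof -
    have "\<one> \<in> set_prod_list G As \<and> set_prod_list G As \<subseteq> carrier G" using Ps
    proof (induction As)
      case Nil then show ?case by (simp add: set_prod_list_def)
    next
      case (Cons A' As')
      then have A': "subgroup A' G" by simp
      from Cons have ih: "\<one> \<in> set_prod_list G As'" "set_prod_list G As' \<subseteq> carrier G" by auto
      have "\<one> \<otimes> \<one> \<in> A' <#> set_prod_list G As'"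
        using ih subgroup.one_closed[OF A'] unfolding set_mult_def by blast
      moreover have "A' <#> set_prod_list G As' \<subseteq> carrier G"
        using setmult_subset_G[OF subgroup.subset[OF A'] ih(2)] .
      ultimately show ?case by (simp add: set_prod_list_def)
    qed
    then show ?thesis by simp
  qed
  show ?case
  proof (cases "B = A")
    case True
    show ?thesis
    proof
      fix b assume "b \<in> B"
      then have b: "b \<in> A" "b \<in> carrier G" using True subgroup.subset[OF A] by auto
      then have "b \<otimes> \<one> \<in> A <#> set_prod_list G As" using oneP unfolding set_mult_def by blast
      then show "b \<in> set_prod_list G (A # As)" using b by (simp add: set_prod_list_def)
    qed
  next
    case False
    then have "B \<in> set As" using Cons.prems by simp
    then have sub: "B \<subseteq> set_prod_list G As" using Cons.IH Ps by blast
    show ?thesis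
    proof
      fix b assume "b \<in> B"
      then have b: "b \<in> set_prod_list G As" "b \<in> carrier G" using sub Psub by auto
      then have "\<one> \<otimes> b \<in> A <#> set_prod_list G As" using subgroup.one_closed[OF A] unfolding set_mult_def by blast
      then show "b \<in> set_prod_list G (A # As)" using b by (simp add: set_prod_list_def)
    qed
  qed
qed

end

theorem theorem1:
  fixes G :: "('a, 'b) monoid_scheme" and x :: "nat \<Rightarrow> 'a" and n :: nat
  assumes "group G"
    and "\<forall>i\<in>{1..n}. x i \<in> carrier G"
    and "generate G (x ` {1..n}) = carrier G"
    and "\<forall>g\<in>carrier G. subgroup (eclass G g) G"
  shows "gamma G 2 = set_prod_list G (map (\<lambda>i. eclass G (x i)) [1..<n]) \<and>
    (\<forall>k s h. k \<ge> 1 \<longrightarrow> (\<forall>j\<in>{1..s}. h j \<in> carrier G) \<longrightarrow>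
           gamma G k = set_prod_list G (map (\<lambda>j. eclass G (h j)) [1..<s+1]) \<longrightarrow>
           gamma G (k + 1) = set_prod_list G
             (concat (map (\<lambda>i. map (\<lambda>j. eclass G (comm G (x i) (h j))) [1..<s+1]) [1..<n+1])))"
proof -
  interpret group G by (rule assms(1))
  have xc: "\<And>i. i \<in> {1..n} \<Longrightarrow> x i \<in> carrier G" using assms(2) by blast
  have esg: "\<And>g. g \<in> carrier G \<Longrightarrow> subgroup (eclass G g) G" using assms(4) by blast
  have ecl: "\<And>y g. y \<in> carrier G \<Longrightarrow> comm G y g \<in> eclass G g" by (auto simp: eclass_def)
  have gen_all: "\<And>K. subgroup K G \<Longrightarrow> (\<And>i. i \<in> {1..n} \<Longrightarrow> x i \<in> K) \<Longrightarrow> K = carrier G"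
  proof -
    fix K assume K: "subgroup K G" and "\<And>i. i \<in> {1..n} \<Longrightarrow> x i \<in> K"
    then have "x ` {1..n} \<subseteq> K" by auto
    then have "generate G (x ` {1..n}) \<subseteq> K" using generate_subgroup_incl K by blast
    then show "K = carrier G" using assms(3) subgroup.subset[OF K] by auto
  qed
  have part1: "gamma G 2 = set_prod_list G (map (\<lambda>i. eclass G (x i)) [1..<n])"
  proof -
    define N where "N = set_prod_list G (map (\<lambda>i. eclass G (x i)) [1..<n])"
    have Nn: "N \<lhd> G" unfolding N_def
      by (rule set_prod_list_normal) (auto intro!: eclass_normal xc esg)
    interpret N: normal N G by (rule Nn)
    have eN: "\<And>i. i \<in> {1..<n} \<Longrightarrow> eclass G (x i) \<subseteq> N" unfolding N_def
      by (rule set_prod_list_super) (auto intro!: esg xc)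
    have cx: "\<And>i. i \<in> {1..n} \<Longrightarrow> cent G N (x i) = carrier G"
    proof -
      fix i assume i: "i \<in> {1..n}"
      show "cent G N (x i) = carrier G"
      proof (cases "i < n")
        case True
        then show ?thesis using eN[of i] i ecl by (auto simp: cent_def)
      next
        case False
        then have ieq: "i = n" using i by simp
        show ?thesis
        proof (rule gen_all[OF cent_subgroup[OF Nn xc[OF i]]])
          fix j assume j: "j \<in> {1..n}"
          show "x j \<in> cent G N (x i)"
          proof (cases "j < n")
            case True
            have "comm G (x i) (x j) \<in> N" using eN[of j] True j ecl xc[OF i] by auto
            then have "inv\<^bsub>G\<^esub> (comm G (x i) (x j)) \<in> N" by simp
            then show ?thesis using comm_swap[OF xc[OF j] xc[OF i]] xc[OF j] by (simp add: cent_def)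
          next
            case False
            then have "j = i" using j ieq by simp
            then show ?thesis using xc[OF i] by (simp add: cent_def)
          qed
        qed
      qed
    qed
    have key: "\<And>a b. a \<in> carrier G \<Longrightarrow> b \<in> carrier G \<Longrightarrow> comm G b a \<in> N"
    proof -
      fix a b assume a: "a \<in> carrier G" and b: "b \<in> carrier G"
      have "cent G N a = carrier G"
      proof (rule gen_all[OF cent_subgroup[OF Nn a]])
        fix j assume j: "j \<in> {1..n}"
        have "comm G a (x j) \<in> N" using cx[OF j] a by (auto simp: cent_def)
        then have "inv\<^bsub>G\<^esub> (comm G a (x j)) \<in> N" by simp
        then show "x j \<in> cent G N a" using comm_swap[OF xc[OF j] a] xc[OF j] by (simp add: cent_def)
      qed
      then show "comm G b a \<in> N" using b by (auto simp: cent_def)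
    qed
    have g2: "gamma G 2 = generate G {comm G a g | a g. a \<in> carrier G \<and> g \<in> carrier G}"
      by (simp add: numeral_2_eq_2)
    have gsub: "{comm G a g | a g. a \<in> carrier G \<and> g \<in> carrier G} \<subseteq> carrier G" by auto
    have "gamma G 2 \<subseteq> N" unfolding g2
      by (rule generate_subgroup_incl) (auto intro: key N.subgroup_axioms)
    moreover have "N \<subseteq> gamma G 2" unfolding N_def g2
    proof (rule set_prod_list_sub[OF generate_is_subgroup[OF gsub]], intro ballI)
      fix A assume "A \<in> set (map (\<lambda>i. eclass G (x i)) [1..<n])"
      then obtain i where i: "i \<in> {1..<n}" and A: "A = eclass G (x i)" by auto
      show "A \<subseteq> generate G {comm G a g | a g. a \<in> carrier G \<and> g \<in> carrier G}"
        unfolding A eclass_def using xc[of i] i by (auto intro!: generate.incl)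
    qed
    ultimately show ?thesis unfolding N_def by blast
  qed
  have part2: "\<And>k s h. k \<ge> 1 \<Longrightarrow> (\<forall>j\<in>{1..s}. h j \<in> carrier G) \<Longrightarrow>
           gamma G k = set_prod_list G (map (\<lambda>j. eclass G (h j)) [1..<s+1]) \<Longrightarrow>
           gamma G (k + 1) = set_prod_list G
             (concat (map (\<lambda>i. map (\<lambda>j. eclass G (comm G (x i) (h j))) [1..<s+1]) [1..<n+1]))"
  proof -
    fix k s h assume k: "k \<ge> 1" and hc0: "\<forall>j\<in>{1..s}. h j \<in> carrier G"
      and gk: "gamma G k = set_prod_list G (map (\<lambda>j. eclass G (h j)) [1..<s+1])"
    have hc: "\<And>j. j \<in> {1..s} \<Longrightarrow> h j \<in> carrier G" using hc0 by blast
    define L where "L = concat (map (\<lambda>i. map (\<lambda>j. eclass G (comm G (x i) (h j))) [1..<s+1]) [1..<n+1])"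
    have setL: "set L = (\<Union>i\<in>{1..n}. (\<lambda>j. eclass G (comm G (x i) (h j))) ` {1..s})"
    proof -
      have e: "\<And>m. {1..<m+1} = {1..m::nat}" by auto
      show ?thesis unfolding L_def set_concat set_map set_upt e image_image by simp
    qed
    define N where "N = set_prod_list G L"
    have pc: "\<And>i j. i \<in> {1..n} \<Longrightarrow> j \<in> {1..s} \<Longrightarrow> comm G (x i) (h j) \<in> carrier G"
      using xc hc by simp
    have Nn: "N \<lhd> G" unfolding N_def
      by (rule set_prod_list_normal) (auto simp: setL intro!: eclass_normal esg pc)
    interpret N: normal N G by (rule Nn)
    have eN: "\<And>i j. i \<in> {1..n} \<Longrightarrow> j \<in> {1..s} \<Longrightarrow> eclass G (comm G (x i) (h j)) \<subseteq> N"
    proof -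
      fix i j assume i: "i \<in> {1..n}" and j: "j \<in> {1..s}"
      have m: "eclass G (comm G (x i) (h j)) \<in> set L" unfolding setL using i j by blast
      have a: "\<forall>A\<in>set L. subgroup A G" unfolding setL by (auto intro!: esg pc)
      show "eclass G (comm G (x i) (h j)) \<subseteq> N" unfolding N_def
        by (rule set_prod_list_super[OF a m])
    qed
    have eS: "\<And>j. j \<in> {1..s} \<Longrightarrow> eclass G (h j) \<subseteq> gamma G k"
    proof -
      fix j assume j: "j \<in> {1..s}"
      have m: "eclass G (h j) \<in> set (map (\<lambda>j. eclass G (h j)) [1..<s+1])" 
      proof -
        have "j \<in> {1..<s+1}" using j by simp
        from imageI[OF this, of "\<lambda>j. eclass G (h j)"] show ?thesis by (simp only: set_map set_upt)
      qed
      have a: "\<forall>A\<in>set (map (\<lambda>j. eclass G (h j)) [1..<s+1]). subgroup A G" by (auto intro!: esg hc)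
      show "eclass G (h j) \<subseteq> gamma G k" unfolding gk
        by (rule set_prod_list_super[OF a m])
    qed
    have gkc: "gamma G k \<subseteq> carrier G"
      unfolding gk by (rule set_prod_list_sub[OF subgroup_self]) (auto intro!: subgroup.subset esg hc)
    define C where "C = {comm G a g | a g. a \<in> gamma G k \<and> g \<in> carrier G}"
    have Cc: "C \<subseteq> carrier G" using gkc by (auto simp: C_def)
    have gk1: "gamma G (k + 1) = generate G C"
      using k by (simp add: C_def)
    define Z where "Z = Zc G N"
    have Zn: "Z \<lhd> G" and NZ: "N \<subseteq> Z" unfolding Z_def using Zc_normal[OF Nn] by auto
    interpret Z: normal Z G by (rule Zn)
    have EZ: "\<And>j. j \<in> {1..s} \<Longrightarrow> eclass G (h j) \<subseteq> Z"
    proof -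
      fix j assume j: "j \<in> {1..s}"
      have "cent G Z (h j) = carrier G"
      proof (rule gen_all[OF cent_subgroup[OF Zn hc[OF j]]])
        fix i assume i: "i \<in> {1..n}"
        have "\<forall>y\<in>carrier G. comm G (comm G (x i) (h j)) y \<in> N"
        proof
          fix y assume y: "y \<in> carrier G"
          have "comm G y (comm G (x i) (h j)) \<in> N" using eN[OF i j] ecl[OF y] by blast
          then have "inv\<^bsub>G\<^esub> (comm G y (comm G (x i) (h j))) \<in> N" by simp
          then show "comm G (comm G (x i) (h j)) y \<in> N" using comm_swap[OF pc[OF i j] y] by simp
        qed
        then have "comm G (x i) (h j) \<in> Z" using pc[OF i j] unfolding Z_def Zc_def by blast
        then show "x i \<in> cent G Z (h j)" using xc[OF i] unfolding cent_def by blast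
      qed
      then show "eclass G (h j) \<subseteq> Z" by (auto simp: eclass_def cent_def)
    qed
    have gZ: "gamma G k \<subseteq> Z"
      unfolding gk by (rule set_prod_list_sub[OF Z.subgroup_axioms]) (auto intro!: EZ)
    have "gamma G (k + 1) \<subseteq> N" unfolding gk1
    proof (rule generate_subgroup_incl[OF _ N.subgroup_axioms])
      show "C \<subseteq> N"
      proof
        fix c assume "c \<in> C"
        then obtain a g where a: "a \<in> gamma G k" and g: "g \<in> carrier G" and c: "c = comm G a g"
          by (auto simp: C_def)
        have "a \<in> Zc G N" using gZ a Z_def by blast
        then show "c \<in> N" using g c by (auto simp: Zc_def)
      qed
    qed
    moreover have "N \<subseteq> gamma G (k + 1)" unfolding N_def gk1
    proof (rule set_prod_list_sub[OF generate_is_subgroup[OF Cc]], intro ballI)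
      fix A assume "A \<in> set L"
      then obtain i j where i: "i \<in> {1..n}" and j: "j \<in> {1..s}"
        and A: "A = eclass G (comm G (x i) (h j))" by (auto simp: setL)
      have pg: "comm G (x i) (h j) \<in> gamma G k" using eS[OF j] ecl[OF xc[OF i]] by blast
      show "A \<subseteq> generate G C"
      proof
        fix c assume "c \<in> A"
        then obtain y where y: "y \<in> carrier G" and c: "c = comm G y (comm G (x i) (h j))"
          by (auto simp: A eclass_def)
        have "comm G (comm G (x i) (h j)) y \<in> C" using pg y by (auto simp: C_def)
        then have "inv\<^bsub>G\<^esub> (comm G (comm G (x i) (h j)) y) \<in> generate G C"
          by (rule generate.inv)
        then show "c \<in> generate G C" using c comm_swap[OF y pc[OF i j]] by simp
      qed
    qed
    ultimately show "gamma G (k + 1) = set_prod_list G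
             (concat (map (\<lambda>i. map (\<lambda>j. eclass G (comm G (x i) (h j))) [1..<s+1]) [1..<n+1]))"
      unfolding N_def L_def by blast
  qed
  show ?thesis using part1 part2 by blast
qed

end
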